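(* Let $n \ge 2$ be an integer and let $p_0 = \frac{n\log n - (n-1)\log(n-1)}{\log n}$. Then for every $p$ with $p_0 \le p \le 2$, $$\max\left\{1,\frac{n!}{n^{n/p}}\right\} \le U(n,p) \le \exp\left\{\frac{p-1}{p}\, e^{1/(p-1)}\right\}\cdot \frac{n!}{n^{n/p}}.$$
   Context: For $n\ge 1$ and $1 \le p \le \infty$, $U(n,p)$ denotes the maximum of $\mathrm{per}(A)=\sum_{\sigma\in S_n}\prod_{i=1}^n a_{i\sigma(i)}$ over all real $n\times n$ matrices $A$ each of whose rows has $\ell_p$-norm equal to $1$. *)

theory Defs
  imports Complex_Main "HOL-Combinatorics.Permutations"
begin

text \<open>Real n x n matrices are represented as functions nat => nat => real,
  only the entries with indices below n being relevant.\<close>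

definition per :: "nat \<Rightarrow> (nat \<Rightarrow> nat \<Rightarrow> real) \<Rightarrow> real" where
  "per n A = (\<Sum>\<sigma> \<in> {\<sigma>. \<sigma> permutes {..<n}}. \<Prod>i<n. A i (\<sigma> i))"

definition row_lp_norm :: "nat \<Rightarrow> real \<Rightarrow> (nat \<Rightarrow> nat \<Rightarrow> real) \<Rightarrow> nat \<Rightarrow> real" where
  "row_lp_norm n p A i = (\<Sum>j<n. \<bar>A i j\<bar> powr p) powr (1 / p)"

text \<open>U(n,p): maximum of the permanent over matrices whose rows all have l_p norm 1
  (the maximum is attained by compactness, so it equals the supremum).\<close>
definition U :: "nat \<Rightarrow> real \<Rightarrow> real" where
  "U n p = Sup {per n A | A. \<forall>i<n. row_lp_norm n p A i = 1}"

end

theory Submission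
  imports Defs "HOL-Analysis.Analysis" "HOL-Real_Asymp.Real_Asymp"
begin

definition xl :: "real \<Rightarrow> real" where "xl t = t * ln t"

lemma xl_cont: "continuous_on {0..} xl"
proof -
  have "continuous (at x within {0..}) xl" if "x \<in> {0..}" for x
  proof (cases "x = 0")
    case True
    have "(xl \<longlongrightarrow> 0) (at_right 0)" unfolding xl_def by real_asymp
    then show ?thesis using True by (simp add: continuous_within at_within_Ici_at_right xl_def)
  next
    case False
    then have "x > 0" using that by auto
    then have "isCont xl x" unfolding xl_def by (auto intro!: continuous_intros)
    then show ?thesis using continuous_at_imp_continuous_within by blast
  qed
  then show ?thesis using continuous_on_eq_continuous_within by blast
qed

lemma xl_0[simp]: "xl 0 = 0" and xl_1[simp]: "xl 1 = 0" by (auto simp: xl_def)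

lemma xl_deriv: "x > 0 \<Longrightarrow> (xl has_real_derivative (ln x + 1)) (at x)"
  unfolding xl_def by (auto intro!: derivative_eq_intros)

definition cc :: "real \<Rightarrow> real" where "cc K = (K - 1) * ln (K / (K - 1))"

definition chi :: "real \<Rightarrow> real \<Rightarrow> real" where
  "chi K w = - ln K * xl (1 - w) + cc K * xl w"
definition chi1 :: "real \<Rightarrow> real \<Rightarrow> real" where
  "chi1 K w = ln K * (ln (1 - w) + 1) + cc K * (ln w + 1)"
definition chi2 :: "real \<Rightarrow> real \<Rightarrow> real" where
  "chi2 K w = - ln K / (1 - w) + cc K / w"

lemma chi_deriv: "0 < w \<Longrightarrow> w < 1 \<Longrightarrow> (chi K has_real_derivative chi1 K w) (at w)"
proof -
  assume w: "0 < w" "w < 1"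
  have "((\<lambda>w. - ln K * ((1 - w) * ln (1 - w)) + cc K * (w * ln w)) has_real_derivative
     (- ln K * ((-1) * ln (1 - w) + (1 - w) * ((-1) / (1 - w))) + cc K * (1 * ln w + w * (1 / w)))) (at w)"
    using w by (auto intro!: derivative_eq_intros)
  moreover have "(- ln K * ((-1) * ln (1 - w) + (1 - w) * ((-1) / (1 - w))) + cc K * (1 * ln w + w * (1 / w))) = chi1 K w"
    using w by (simp add: chi1_def field_simps)
  moreover have "chi K = (\<lambda>w. - ln K * ((1 - w) * ln (1 - w)) + cc K * (w * ln w))"
    by (simp add: fun_eq_iff chi_def xl_def)
  ultimately show ?thesis by simp
qed

lemma chi1_deriv: "0 < w \<Longrightarrow> w < 1 \<Longrightarrow> (chi1 K has_real_derivative chi2 K w) (at w)"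
proof -
  assume w: "0 < w" "w < 1"
  have "((\<lambda>w. ln K * (ln (1 - w) + 1) + cc K * (ln w + 1)) has_real_derivative
     (ln K * ((-1) / (1 - w) + 0) + cc K * (1 / w + 0))) (at w)"
    using w by (auto intro!: derivative_eq_intros)
  moreover have "(ln K * ((-1) / (1 - w) + 0) + cc K * (1 / w + 0)) = chi2 K w"
    using w by (simp add: chi2_def field_simps)
  moreover have "chi1 K = (\<lambda>w. ln K * (ln (1 - w) + 1) + cc K * (ln w + 1))"
    by (simp add: fun_eq_iff chi1_def)
  ultimately show ?thesis by simp
qed

lemma xl_comp_cont: "continuous_on S f \<Longrightarrow> (\<And>x. x \<in> S \<Longrightarrow> f x \<ge> 0) \<Longrightarrow> continuous_on S (\<lambda>x. xl (f x))"
  by (rule continuous_on_compose2[OF xl_cont]) auto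

definition FF :: "real \<Rightarrow> real \<Rightarrow> real" where
  "FF K x = chi K x + (K - 1) * chi K ((1 - x) / (K - 1))"
definition FF1 :: "real \<Rightarrow> real \<Rightarrow> real" where
  "FF1 K x = chi1 K x - chi1 K ((1 - x) / (K - 1))"
definition FF2 :: "real \<Rightarrow> real \<Rightarrow> real" where
  "FF2 K x = chi2 K x + chi2 K ((1 - x) / (K - 1)) / (K - 1)"

lemma FF_deriv:
  assumes K: "K \<ge> 2" and x: "0 < x" "x < 1"
  shows "(FF K has_real_derivative FF1 K x) (at x)"
proof -
  let ?y = "(1 - x) / (K - 1)"
  have y: "0 < ?y" "?y < 1" using K x by (auto simp: field_simps)
  have d0: "((\<lambda>x. (1 - x) / (K - 1)) has_real_derivative ((0 - 1) / (K - 1))) (at x)"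
    by (rule DERIV_cdivide, auto intro!: derivative_eq_intros)
  then have d: "((\<lambda>x. (1 - x) / (K - 1)) has_real_derivative (-1 / (K - 1))) (at x)" by simp
  have "((\<lambda>x. chi K ((1 - x) / (K - 1))) has_real_derivative chi1 K ?y * (-1 / (K - 1))) (at x)"
    by (rule DERIV_chain2[OF chi_deriv[OF y] d])
  then have "((\<lambda>x. chi K x + (K - 1) * chi K ((1 - x) / (K - 1))) has_real_derivative
      chi1 K x + (K - 1) * (chi1 K ?y * (-1 / (K - 1)))) (at x)"
    using chi_deriv[OF x] by (auto intro!: derivative_eq_intros)
  moreover have "chi1 K x + (K - 1) * (chi1 K ?y * (-1 / (K - 1))) = FF1 K x"
    using K by (simp add: FF1_def)
  ultimately show ?thesis by (simp add: FF_def[abs_def])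
qed

lemma FF1_deriv:
  assumes K: "K \<ge> 2" and x: "0 < x" "x < 1"
  shows "(FF1 K has_real_derivative FF2 K x) (at x)"
proof -
  let ?y = "(1 - x) / (K - 1)"
  have y: "0 < ?y" "?y < 1" using K x by (auto simp: field_simps)
  have d0: "((\<lambda>x. (1 - x) / (K - 1)) has_real_derivative ((0 - 1) / (K - 1))) (at x)"
    by (rule DERIV_cdivide, auto intro!: derivative_eq_intros)
  then have d: "((\<lambda>x. (1 - x) / (K - 1)) has_real_derivative (-1 / (K - 1))) (at x)" by simp
  have "((\<lambda>x. chi1 K ((1 - x) / (K - 1))) has_real_derivative chi2 K ?y * (-1 / (K - 1))) (at x)"
    by (rule DERIV_chain2[OF chi1_deriv[OF y] d])
  then have "((\<lambda>x. chi1 K x - chi1 K ((1 - x) / (K - 1))) has_real_derivative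
      chi2 K x - (chi2 K ?y * (-1 / (K - 1)))) (at x)"
    using chi1_deriv[OF x] by (auto intro!: derivative_eq_intros)
  moreover have "chi2 K x - (chi2 K ?y * (-1 / (K - 1))) = FF2 K x"
    using K by (simp add: FF2_def)
  ultimately show ?thesis by (simp add: FF1_def[abs_def])
qed

lemma FF_cont: assumes K: "K \<ge> 2" shows "continuous_on {0..1} (FF K)"
proof -
  have "FF K = (\<lambda>x. - ln K * xl (1 - x) + cc K * xl x
     + (K - 1) * (- ln K * xl (1 - (1 - x) / (K - 1)) + cc K * xl ((1 - x) / (K - 1))))"
    by (simp add: fun_eq_iff FF_def chi_def)
  moreover have "continuous_on {0..1} (\<lambda>x. - ln K * xl (1 - x) + cc K * xl x
     + (K - 1) * (- ln K * xl (1 - (1 - x) / (K - 1)) + cc K * xl ((1 - x) / (K - 1))))"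
    using K
    by (intro continuous_intros xl_comp_cont) (auto simp: field_simps)
  ultimately show ?thesis by simp
qed

lemma chi_inv_K: assumes K: "K \<ge> 2" shows "chi K (1 / K) = 0"
proof -
  have "1 - 1 / K = (K - 1) / K" using K by (simp add: field_simps)
  moreover have "ln ((K - 1) / K) = - ln (K / (K - 1))" using K by (simp add: ln_div)
  ultimately show ?thesis using K by (simp add: chi_def xl_def cc_def ln_div field_simps)
qed

lemma FF_inv_K: assumes K: "K \<ge> 2" shows "FF K (1 / K) = 0"
proof -
  have "(1 - 1 / K) / (K - 1) = 1 / K" using K by (simp add: field_simps)
  then show ?thesis using chi_inv_K[OF K] by (simp add: FF_def)
qed

lemma FF_one: "FF K 1 = 0"
  by (simp add: FF_def chi_def)

lemma FF1_inv_K: assumes K: "K \<ge> 2" shows "FF1 K (1 / K) = 0"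
proof -
  have "(1 - 1 / K) / (K - 1) = 1 / K" using K by (simp add: field_simps)
  then show ?thesis by (simp add: FF1_def)
qed

lemma cc_le: assumes K: "K \<ge> 2" shows "cc K \<le> (K - 1) * ln K" "cc K \<ge> 0"
proof -
  have "K / (K - 1) \<le> K" using K by (simp add: field_simps)
  then have "ln (K / (K - 1)) \<le> ln K" using K by (subst ln_le_cancel_iff) auto
  then show "cc K \<le> (K - 1) * ln K" using K unfolding cc_def by (intro mult_left_mono) auto
  have "K / (K - 1) \<ge> 1" using K by (simp add: field_simps)
  then show "cc K \<ge> 0" using K unfolding cc_def by auto
qed

definition PP :: "real \<Rightarrow> real \<Rightarrow> real" where
  "PP K t = cc K * (K - 2) - t * (ln K * (K - 1) - cc K)"

lemma FF2_sign:
  assumes K: "K \<ge> 2" and x: "0 < x" "x < 1"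
  shows "FF2 K x * (x * (1 - x) * (K - 2 + x)) = PP K x"
proof -
  have a: "1 - (1 - x) / (K - 1) = (K - 2 + x) / (K - 1)" using K by (simp add: field_simps)
  have p: "K - 2 + x > 0" using K x by auto
  have h1: "ln K / ((K - 2 + x) / (K - 1)) / (K - 1) = ln K / (K - 2 + x)"
  proof -
    have "K - 1 \<noteq> 0" using K by auto
    then show ?thesis using p by (simp add: divide_simps)
  qed
  have h2: "cc K / ((1 - x) / (K - 1)) / (K - 1) = cc K / (1 - x)"
  proof -
    have "K - 1 \<noteq> 0" "1 - x \<noteq> 0" using K x by auto
    then show ?thesis by (simp add: divide_simps)
  qed
  have e1: "chi2 K ((1 - x) / (K - 1)) / (K - 1) = (- ln K / (1 - (1 - x) / (K - 1))) / (K - 1) + cc K / ((1 - x) / (K - 1)) / (K - 1)"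
    unfolding chi2_def by (rule add_divide_distrib)
  have e2: "(- ln K / (1 - (1 - x) / (K - 1))) / (K - 1) = - (ln K / (1 - (1 - x) / (K - 1)) / (K - 1))"
    by simp
  have e: "FF2 K x = - ln K / (1 - x) + cc K / x - ln K / (K - 2 + x) + cc K / (1 - x)"
    unfolding FF2_def e1 e2 unfolding a h1 h2 by (simp add: chi2_def)
  have q1: "(- ln K / (1 - x)) * (x * (1 - x) * (K - 2 + x)) = - ln K * x * (K - 2 + x)" using x by simp
  have q2: "(cc K / x) * (x * (1 - x) * (K - 2 + x)) = cc K * (1 - x) * (K - 2 + x)" using x by simp
  have q3: "(ln K / (K - 2 + x)) * (x * (1 - x) * (K - 2 + x)) = ln K * x * (1 - x)" using p by simp
  have q4: "(cc K / (1 - x)) * (x * (1 - x) * (K - 2 + x)) = cc K * x * (K - 2 + x)" using x by simp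
  have "(- ln K / (1 - x) + cc K / x - ln K / (K - 2 + x) + cc K / (1 - x)) * (x * (1 - x) * (K - 2 + x))
     = - ln K * x * (K - 2 + x) + cc K * (1 - x) * (K - 2 + x) - ln K * x * (1 - x) + cc K * x * (K - 2 + x)"
    unfolding distrib_right left_diff_distrib q1 q2 q3 q4 by simp
  also have "\<dots> = PP K x" unfolding PP_def by (simp add: algebra_simps)
  finally show ?thesis using e by simp
qed

lemma FF2_nonneg: assumes K: "K \<ge> 2" and x: "0 < x" "x < 1" and "PP K x \<ge> 0" shows "FF2 K x \<ge> 0"
proof -
  have pos: "x * (1 - x) * (K - 2 + x) > 0" using K x by auto
  then have "FF2 K x = PP K x / (x * (1 - x) * (K - 2 + x))" using FF2_sign[OF K x] by (simp add: field_simps)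
  then show ?thesis using assms(4) pos by simp
qed

lemma FF2_nonpos: assumes K: "K \<ge> 2" and x: "0 < x" "x < 1" and "PP K x \<le> 0" shows "FF2 K x \<le> 0"
proof -
  have pos: "x * (1 - x) * (K - 2 + x) > 0" using K x by auto
  then have "FF2 K x = PP K x / (x * (1 - x) * (K - 2 + x))" using FF2_sign[OF K x] by (simp add: field_simps)
  then show ?thesis using assms(4) pos by (simp add: divide_nonpos_pos)
qed

lemma PP_mono: assumes K: "K \<ge> 2" and "s \<le> t" shows "PP K t \<le> PP K s"
proof -
  have "ln K * (K - 1) - cc K \<ge> 0" using cc_le[OF K] by (simp add: mult.commute)
  then show ?thesis unfolding PP_def using assms(2) by (simp add: mult_right_mono)
qed

lemma FF1_claim:
  assumes K: "K \<ge> 2" and h: "1 / K \<le> \<eta>" "\<eta> \<le> \<xi>" "\<xi> < 1" and pos: "FF1 K \<xi> > 0"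
  shows "FF1 K \<eta> \<ge> 0"
proof (cases "PP K \<eta> \<le> 0")
  case True
  have ik: "1 / K > 0" using K by auto
  have "- FF1 K \<eta> \<le> - FF1 K \<xi>"
  proof (rule DERIV_nonneg_imp_nondecreasing[where f = "\<lambda>t. - FF1 K t"])
    show "\<eta> \<le> \<xi>" by fact
    fix t assume t: "\<eta> \<le> t" "t \<le> \<xi>"
    have t01: "0 < t" "t < 1" using t h ik by linarith+
    have "PP K t \<le> PP K \<eta>" using PP_mono[OF K t(1)] .
    then have "FF2 K t \<le> 0" using FF2_nonpos[OF K t01] True by auto
    then show "\<exists>y. ((\<lambda>t. - FF1 K t) has_real_derivative y) (at t) \<and> 0 \<le> y"
      using FF1_deriv[OF K t01] by (auto intro!: exI[of _ "- FF2 K t"] derivative_eq_intros)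
  qed
  then show ?thesis using pos by auto
next
  case False
  have ik: "1 / K > 0" "1 / K < 1" using K by auto
  have "FF1 K (1 / K) \<le> FF1 K \<eta>"
  proof (rule DERIV_nonneg_imp_nondecreasing[where f = "FF1 K"])
    show "1 / K \<le> \<eta>" by fact
    fix t assume t: "1 / K \<le> t" "t \<le> \<eta>"
    have t01: "0 < t" "t < 1" using t h ik by linarith+
    have "PP K \<eta> \<le> PP K t" using PP_mono[OF K t(2)] .
    then have "FF2 K t \<ge> 0" using FF2_nonneg[OF K t01] False by auto
    then show "\<exists>y. (FF1 K has_real_derivative y) (at t) \<and> 0 \<le> y"
      using FF1_deriv[OF K t01] by auto
  qed
  then show ?thesis using FF1_inv_K[OF K] by simp
qed

lemma MVT_FF:
  assumes K: "K \<ge> 2" and ab: "0 \<le> a" "a < b" "b \<le> 1"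
  shows "\<exists>z. a < z \<and> z < b \<and> FF K b - FF K a = (b - a) * FF1 K z"
proof -
  have c: "continuous_on {a..b} (FF K)" using continuous_on_subset[OF FF_cont[OF K]] ab by auto
  have "\<And>x. a < x \<Longrightarrow> x < b \<Longrightarrow> FF K differentiable at x"
    using FF_deriv[OF K] ab real_differentiable_def by (meson le_less_trans less_le_trans)
  from MVT[OF ab(2) c this] obtain l z where z: "a < z" "z < b" "(FF K has_real_derivative l) (at z)"
    "FF K b - FF K a = (b - a) * l" by blast
  have "l = FF1 K z" using DERIV_unique[OF z(3) FF_deriv[OF K]] z ab by auto
  then show ?thesis using z by auto
qed

lemma FF_nonneg:
  assumes K: "K \<ge> 2" and x: "1 / K \<le> x" "x \<le> 1"
  shows "FF K x \<ge> 0"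
proof (rule ccontr)
  assume neg: "\<not> FF K x \<ge> 0"
  have ik: "1 / K > 0" using K by auto
  have x1: "1 / K < x" using neg x FF_inv_K[OF K] by (cases "x = 1 / K") auto
  have x2: "x < 1" using neg x FF_one by (cases "x = 1") auto
  obtain z1 where z1: "1 / K < z1" "z1 < x" "FF K x - FF K (1 / K) = (x - 1 / K) * FF1 K z1"
    using MVT_FF[OF K _ x1] ik x2 by auto
  obtain z2 where z2: "x < z2" "z2 < 1" "FF K 1 - FF K x = (1 - x) * FF1 K z2"
    using MVT_FF[OF K _ x2] ik x1 by auto
  have "(x - 1 / K) * FF1 K z1 < 0" using z1(3) neg FF_inv_K[OF K] by simp
  then have "FF1 K z1 < 0" using x1 by (simp add: mult_less_0_iff)
  moreover have "(1 - x) * FF1 K z2 > 0" using z2(3) neg FF_one by simp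
  then have "FF1 K z2 > 0" using x2 by (simp add: zero_less_mult_iff)
  then have "FF1 K z1 \<ge> 0" using FF1_claim[OF K, of z1 z2] z1 z2 by auto
  ultimately show False by auto
qed

lemma convexity_cond:
  fixes k :: nat assumes k: "k \<ge> 2"
  shows "ln (real k) \<le> cc (real k) * (real k - 1)"
proof -
  consider "k = 2" | "k = 3" | "k \<ge> 4" using k by linarith
  then show ?thesis
  proof cases
    case 1 then show ?thesis by (simp add: cc_def)
  next
    case 2
    have "(3::real) \<le> (3/2)^4" by (simp add: power_divide)
    then have "ln (3::real) \<le> ln ((3/2)^4)" by (subst ln_le_cancel_iff) auto
    also have "\<dots> = 4 * ln (3/2)" by (simp add: ln_realpow)
    finally show ?thesis using 2 by (simp add: cc_def)
  next
    case 3
    let ?K = "real k"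
    have K: "?K \<ge> 4" using 3 by simp
    have x: "0 \<le> 1 / (?K - 1)" "1 / (?K - 1) \<le> 1" using K by auto
    have e: "?K / (?K - 1) = 1 + 1 / (?K - 1)" using K by (simp add: field_simps)
    have "1 / (?K - 1) - (1 / (?K - 1))^2 \<le> ln (?K / (?K - 1))"
      unfolding e using ln_one_plus_pos_lower_bound[OF x] .
    then have "(?K - 1)^2 * (1 / (?K - 1) - (1 / (?K - 1))^2) \<le> (?K - 1)^2 * ln (?K / (?K - 1))"
      by (intro mult_left_mono) auto
    moreover have "(?K - 1)^2 * (1 / (?K - 1) - (1 / (?K - 1))^2) = ?K - 2"
    proof -
      have nz: "?K - 1 \<noteq> 0" using K by simp
      have g: "\<And>a::real. a \<noteq> 0 \<Longrightarrow> a^2 * (1/a - (1/a)^2) = a - 1"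
        by (simp add: field_simps power2_eq_square)
      show ?thesis using g[OF nz] by simp
    qed
    ultimately have A: "?K - 2 \<le> (?K - 1)^2 * ln (?K / (?K - 1))" by simp
    have "ln (?K / 2) \<le> ?K / 2 - 1" using ln_le_minus_one[of "?K/2"] K by simp
    moreover have "ln (?K / 2) = ln ?K - ln 2" using K by (simp add: ln_div)
    moreover have "ln (2::real) \<le> 1"
    proof -
      show ?thesis using ln_le_minus_one[of "2::real"] by simp
    qed
    ultimately have "ln ?K \<le> ?K - 2" using K by linarith
    with A show ?thesis by (simp add: cc_def power2_eq_square algebra_simps)
  qed
qed

lemma chi2_nonneg:
  fixes k :: nat assumes k: "k \<ge> 2" and w: "0 < w" "w \<le> 1 / real k"
  shows "chi2 (real k) w \<ge> 0"
proof -
  let ?K = "real k"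
  have K: "?K \<ge> 2" using k by simp
  have "1 / ?K \<le> 1 / 2" using K by (intro divide_left_mono) auto
  then have w1: "w < 1" using w by linarith
  have cc0: "cc ?K \<ge> 0" using cc_le[OF K] by simp
  have "ln ?K * w \<le> ln ?K * (1 / ?K)" using w K by (intro mult_left_mono) auto
  also have "\<dots> = ln ?K / ?K" by simp
  also have "\<dots> \<le> cc ?K * (?K - 1) / ?K" using convexity_cond[OF k] K by (intro divide_right_mono) auto
  also have "\<dots> = cc ?K * (1 - 1 / ?K)" using K by (simp add: field_simps)
  also have "\<dots> \<le> cc ?K * (1 - w)" using w cc0 by (intro mult_left_mono) auto
  finally have "ln ?K * w \<le> cc ?K * (1 - w)" .
  then have "ln ?K / (1 - w) \<le> cc ?K / w" using w w1 by (simp add: field_simps)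
  then show ?thesis by (simp add: chi2_def)
qed

lemma chi_cont: "continuous_on {0..1} (chi K)"
proof -
  have "chi K = (\<lambda>w. - ln K * xl (1 - w) + cc K * xl w)" by (simp add: fun_eq_iff chi_def)
  moreover have "continuous_on {0..1} (\<lambda>w. - ln K * xl (1 - w) + cc K * xl w)"
    by (intro continuous_intros xl_comp_cont) auto
  ultimately show ?thesis by simp
qed

lemma chi_MVT:
  assumes ab: "0 \<le> a" "a < b" "b \<le> 1"
  shows "\<exists>z. a < z \<and> z < b \<and> chi K b - chi K a = (b - a) * chi1 K z"
proof -
  have c: "continuous_on {a..b} (chi K)" using continuous_on_subset[OF chi_cont] ab by auto
  have "\<And>x. a < x \<Longrightarrow> x < b \<Longrightarrow> chi K differentiable at x"
    using chi_deriv ab real_differentiable_def by (meson le_less_trans less_le_trans)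
  from MVT[OF ab(2) c this] obtain l z where z: "a < z" "z < b" "(chi K has_real_derivative l) (at z)"
    "chi K b - chi K a = (b - a) * l" by blast
  have "l = chi1 K z" using DERIV_unique[OF z(3) chi_deriv] z ab by auto
  then show ?thesis using z by auto
qed

lemma chi1_mono:
  fixes k :: nat assumes k: "k \<ge> 2" and ab: "0 < a" "a \<le> b" "b \<le> 1 / real k"
  shows "chi1 (real k) a \<le> chi1 (real k) b"
proof (rule DERIV_nonneg_imp_nondecreasing[where f = "chi1 (real k)"])
  show "a \<le> b" by fact
  fix t assume t: "a \<le> t" "t \<le> b"
  have K: "real k \<ge> 2" using k by simp
  have t0: "0 < t" "t \<le> 1 / real k" using t ab by auto
  have "1 / real k \<le> 1 / 2" using K by (intro divide_left_mono) auto
  then have t1: "t < 1" using t0 by linarith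
  show "\<exists>y. (chi1 (real k) has_real_derivative y) (at t) \<and> 0 \<le> y"
    using chi1_deriv[OF t0(1) t1] chi2_nonneg[OF k t0] by auto
qed

lemma chi_tangent:
  fixes k :: nat assumes k: "k \<ge> 2" and y: "0 < y" "y \<le> 1 / real k" and v: "0 \<le> v" "v \<le> 1 / real k"
  shows "chi (real k) v \<ge> chi (real k) y + chi1 (real k) y * (v - y)"
proof -
  have K: "real k \<ge> 2" using k by simp
  have ik: "1 / real k < 1" using K by simp
  consider "v < y" | "v = y" | "y < v" by linarith
  then show ?thesis
  proof cases
    case 1
    obtain z where z: "v < z" "z < y" "chi (real k) y - chi (real k) v = (y - v) * chi1 (real k) z"
      using chi_MVT[OF v(1) 1] y ik by auto
    have "chi1 (real k) z \<le> chi1 (real k) y" using chi1_mono[OF k, of z y] z v y by auto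
    then have "(y - v) * chi1 (real k) z \<le> (y - v) * chi1 (real k) y" using 1 by (intro mult_left_mono) auto
    then show ?thesis using z(3) by (simp add: algebra_simps)
  next
    case 2 then show ?thesis by simp
  next
    case 3
    obtain z where z: "y < z" "z < v" "chi (real k) v - chi (real k) y = (v - y) * chi1 (real k) z"
      using chi_MVT[of y v] 3 y v ik by auto
    have "chi1 (real k) y \<le> chi1 (real k) z" using chi1_mono[OF k, of y z] z v y by auto
    then have "(v - y) * chi1 (real k) y \<le> (v - y) * chi1 (real k) z" using 3 by (intro mult_left_mono) auto
    then show ?thesis using z(3) by (simp add: algebra_simps)
  qed
qed


lemma chi_0[simp]: "chi K 0 = 0" and chi_1[simp]: "chi K 1 = 0" by (simp_all add: chi_def)

lemma combine_step:
  fixes \<alpha> \<beta> T cS cy c1 SW y s :: real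
  assumes a: "\<alpha> \<ge> 0" and b: "\<beta> \<ge> 0" and bd: "\<beta> = 1 - cS * \<alpha>"
    and E: "\<alpha> * SW + \<beta> * s = y"
    and h1: "T \<ge> cS * cy + c1 * (SW - cS * y)" and h2: "0 \<ge> cy + c1 * (s - y)"
  shows "\<alpha> * T \<ge> cy"
proof -
  have "\<alpha> * T \<ge> \<alpha> * (cS * cy + c1 * (SW - cS * y))" using a h1 by (intro mult_left_mono)
  moreover have "0 \<ge> \<beta> * (cy + c1 * (s - y))" using b h2 by (simp add: mult_nonneg_nonpos)
  moreover have "\<alpha> * (cS * cy + c1 * (SW - cS * y)) + \<beta> * (cy + c1 * (s - y))
      = cy * (\<alpha> * cS + \<beta>) + c1 * (\<alpha> * SW + \<beta> * s) - c1 * y * (\<alpha> * cS + \<beta>)"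
    by (simp add: algebra_simps)
  moreover have "\<alpha> * cS + \<beta> = 1" using bd by simp
  ultimately show ?thesis using E by simp
qed

lemma key_chi:
  fixes k :: nat and R :: "'a set" and w :: "'a \<Rightarrow> real"
  assumes k: "k \<ge> 2" and R: "finite R" "card R = k" and w0: "\<And>i. i \<in> R \<Longrightarrow> w i \<ge> 0"
    and ws: "(\<Sum>i\<in>R. w i) = 1"
  shows "(\<Sum>i\<in>R. chi (real k) (w i)) \<ge> 0"
proof -
  define K where "K = real k"
  define s where "s = 1 / K"
  have K: "K \<ge> 2" using k by (simp add: K_def)
  have sK: "s * K = 1" using K by (simp add: s_def)
  have s0: "s > 0" using K by (simp add: s_def)
  have wle: "w i \<le> 1" if "i \<in> R" for i
    using member_le_sum[of i R w] that w0 R ws by auto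
  show ?thesis
  proof (cases "\<exists>i\<in>R. w i = 1")
    case True
    then obtain i where i: "i \<in> R" "w i = 1" by auto
    have "(\<Sum>j\<in>R - {i}. w j) = 0" using ws i R sum.remove[of R i w] by simp
    then have z: "\<forall>j\<in>R - {i}. w j = 0" using sum_nonneg_eq_0_iff[of "R - {i}" w] R w0 by auto
    have "\<forall>j\<in>R. chi (real k) (w j) = 0"
    proof
      fix j assume "j \<in> R"
      then show "chi (real k) (w j) = 0" using z i by (cases "j = i") auto
    qed
    then show ?thesis by simp
  next
    case False
    then have w1: "w i < 1" if "i \<in> R" for i using wle[OF that] that by force
    define Lg where "Lg = {i\<in>R. w i > s}"
    define Sm where "Sm = {i\<in>R. w i \<le> s}"
    have fin: "finite Lg" "finite Sm" using R by (auto simp: Lg_def Sm_def)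
    have dis: "Lg \<inter> Sm = {}" and un: "Lg \<union> Sm = R" by (auto simp: Lg_def Sm_def)
    have tot: "(\<Sum>i\<in>R. (w i - s)) = 0"
      using ws R sK by (simp add: sum_subtractf K_def mult.commute)
    show ?thesis
    proof (cases "Lg = {}")
      case True
      then have "\<forall>i\<in>R. w i \<le> s" by (auto simp: Lg_def)
      moreover have "(\<Sum>i\<in>R. (s - w i)) = 0"
      proof -
        have "(\<Sum>i\<in>R. (s - w i)) = (\<Sum>i\<in>R. - (w i - s))" by simp
        also have "\<dots> = - (\<Sum>i\<in>R. (w i - s))" by (rule sum_negf)
        finally show ?thesis using tot by simp
      qed
      ultimately have "\<forall>i\<in>R. s - w i = 0" using sum_nonneg_eq_0_iff[of R "\<lambda>i. s - w i"] R by auto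
      then have "\<forall>i\<in>R. chi (real k) (w i) = 0" using chi_inv_K[of K] K by (auto simp: s_def K_def)
      then show ?thesis by simp
    next
      case False
      define D where "D = (\<Sum>i\<in>Lg. (w i - s))"
      have D0: "D > 0" unfolding D_def using False fin by (intro sum_pos) (auto simp: Lg_def)
      have "(\<Sum>i\<in>R. (w i - s)) = D + (\<Sum>i\<in>Sm. (w i - s))"
        unfolding D_def un[symmetric] using fin dis by (simp add: sum.union_disjoint)
      then have DS: "(\<Sum>i\<in>Sm. w i) = card Sm * s - D" using tot by (simp add: sum_subtractf)
      have cardLS: "card Lg + card Sm = k" using card_Un_disjoint[OF fin dis] un R by simp
      have "card Lg \<ge> 1" using False fin by (simp add: Suc_le_eq card_gt_0_iff)
      then have cS: "real (card Sm) \<le> K - 1" using cardLS by (simp add: K_def)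
      define T where "T = (\<Sum>j\<in>Sm. chi K (w j))"
      have claim: "chi K (w i) \<ge> - ((w i - s) / D) * T" if i: "i \<in> Lg" for i
      proof -
        have iR: "i \<in> R" and wis: "w i > s" using i by (auto simp: Lg_def)
        define y where "y = (1 - w i) / (K - 1)"
        have y0: "y > 0" using w1[OF iR] K by (simp add: y_def)
        have ys: "y \<le> s"
        proof -
          have "K * (1 - w i) \<le> K - 1" using wis sK K by (simp add: algebra_simps s_def field_simps)
          then show ?thesis using K by (simp add: y_def s_def field_simps)
        qed
        have F: "chi K (w i) + (K - 1) * chi K y \<ge> 0"
          using FF_nonneg[OF K, of "w i"] wis wle[OF iR] by (simp add: FF_def y_def s_def)
        define \<alpha> where "\<alpha> = (w i - s) / (D * (K - 1))"
        define \<beta> where "\<beta> = 1 - card Sm * \<alpha>"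
        have a0: "\<alpha> \<ge> 0" using wis D0 K by (simp add: \<alpha>_def)
        have wiD: "w i - s \<le> D" unfolding D_def
          using member_le_sum[of i Lg "\<lambda>i. w i - s"] i fin by (auto simp: Lg_def)
        have "card Sm * \<alpha> \<le> 1"
        proof -
          have "card Sm * \<alpha> = card Sm * (w i - s) / (D * (K - 1))" by (simp add: \<alpha>_def)
          also have "\<dots> \<le> (K - 1) * D / (D * (K - 1))"
            using cS wiD wis D0 K by (intro divide_right_mono mult_mono) auto
          also have "\<dots> = 1" using D0 K by simp
          finally show ?thesis .
        qed
        then have b0: "\<beta> \<ge> 0" by (simp add: \<beta>_def)
        have E: "\<alpha> * (\<Sum>j\<in>Sm. w j) + \<beta> * s = y"
        proof -
          have "\<alpha> * (\<Sum>j\<in>Sm. w j) + \<beta> * s = s - \<alpha> * D" unfolding DS \<beta>_def by (simp add: algebra_simps)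
          also have "\<dots> = s - (w i - s) / (K - 1)" using D0 by (simp add: \<alpha>_def)
          also have "\<dots> = y" using K sK by (simp add: y_def field_simps)
          finally show ?thesis .
        qed
        have h1: "T \<ge> card Sm * chi K y + chi1 K y * ((\<Sum>j\<in>Sm. w j) - card Sm * y)"
        proof -
          have "T \<ge> (\<Sum>j\<in>Sm. chi K y + chi1 K y * (w j - y))"
            unfolding T_def
          proof (rule sum_mono)
            fix j assume j: "j \<in> Sm"
            then show "chi K y + chi1 K y * (w j - y) \<le> chi K (w j)"
              using chi_tangent[OF k, of y "w j"] y0 ys w0[of j] by (auto simp: Sm_def K_def s_def)
          qed
          also have "(\<Sum>j\<in>Sm. chi K y + chi1 K y * (w j - y)) = card Sm * chi K y + chi1 K y * ((\<Sum>j\<in>Sm. w j) - card Sm * y)"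
            by (simp add: sum.distrib sum_distrib_left[symmetric] sum_subtractf)
          finally show ?thesis .
        qed
        have h2: "0 \<ge> chi K y + chi1 K y * (s - y)"
          using chi_tangent[OF k, of y s] y0 ys s0 chi_inv_K[OF K] by (simp add: K_def s_def)
        have "\<alpha> * T \<ge> chi K y" by (rule combine_step[OF a0 b0 \<beta>_def E h1 h2])
        then have "(K - 1) * (\<alpha> * T) \<ge> (K - 1) * chi K y" using K by (intro mult_left_mono) auto
        moreover have "(K - 1) * (\<alpha> * T) = ((w i - s) / D) * T" using K by (simp add: \<alpha>_def)
        ultimately show ?thesis using F by simp
      qed
      have "(\<Sum>i\<in>Lg. chi K (w i)) \<ge> (\<Sum>i\<in>Lg. - ((w i - s) / D) * T)"
        by (rule sum_mono) (use claim in auto)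
      also have "(\<Sum>i\<in>Lg. - ((w i - s) / D) * T) = (\<Sum>i\<in>Lg. (w i - s) * (- T / D))"
        by (rule sum.cong) auto
      also have "\<dots> = D * (- T / D)" unfolding D_def by (rule sum_distrib_right[symmetric])
      also have "\<dots> = - T" using D0 by simp
      finally have "(\<Sum>i\<in>Lg. chi K (w i)) + T \<ge> 0" by simp
      moreover have "(\<Sum>i\<in>R. chi K (w i)) = (\<Sum>i\<in>Lg. chi K (w i)) + T"
        unfolding T_def un[symmetric] using fin dis by (simp add: sum.union_disjoint)
      ultimately show ?thesis by (simp add: K_def)
    qed
  qed
qed

definition ek :: "real \<Rightarrow> nat \<Rightarrow> real" where "ek p k = (p - 1) * ln (real k) - cc (real k)"
definition rr :: "real \<Rightarrow> nat \<Rightarrow> real" where "rr p k = exp (ek p k / p)"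
definition MM :: "real \<Rightarrow> nat \<Rightarrow> real" where "MM p k = max 1 (rr p k)"

lemma xl_nonpos: "0 \<le> w \<Longrightarrow> w \<le> 1 \<Longrightarrow> xl w \<le> 0"
  unfolding xl_def by (cases "w = 0") (auto intro!: mult_nonneg_nonpos)

lemma entropy_le:
  fixes R :: "'a set" and w :: "'a \<Rightarrow> real"
  assumes R: "finite R" "card R = k" "k \<ge> 1" and w0: "\<And>i. i \<in> R \<Longrightarrow> w i \<ge> 0"
    and ws: "(\<Sum>i\<in>R. w i) = 1"
  shows "- (\<Sum>i\<in>R. xl (w i)) \<le> ln (real k)"
proof -
  have each: "- xl (w i) - w i * ln (real k) \<le> 1 / real k - w i" if i: "i \<in> R" for i
  proof (cases "w i = 0")
    case True then show ?thesis using R by simp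
  next
    case False
    then have wp: "w i > 0" using w0[OF i] by auto
    have "ln (1 / (real k * w i)) \<le> 1 / (real k * w i) - 1" using wp R by (intro ln_le_minus_one) auto
    then have "w i * ln (1 / (real k * w i)) \<le> w i * (1 / (real k * w i) - 1)" using wp by (intro mult_left_mono) auto
    moreover have "ln (1 / (real k * w i)) = - ln (real k) - ln (w i)" using wp R by (simp add: ln_div ln_mult)
    moreover have "w i * (1 / (real k * w i) - 1) = 1 / real k - w i" using wp by (simp add: field_simps)
    ultimately show ?thesis by (simp add: xl_def algebra_simps)
  qed
  have "(\<Sum>i\<in>R. - xl (w i) - w i * ln (real k)) \<le> (\<Sum>i\<in>R. 1 / real k - w i)"
    using each by (rule sum_mono)
  then have "- (\<Sum>i\<in>R. xl (w i)) - (\<Sum>i\<in>R. w i) * ln (real k) \<le> card R / real k - (\<Sum>i\<in>R. w i)"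
    by (simp add: sum_subtractf sum_negf sum_distrib_right)
  then show ?thesis using ws R by simp
qed

lemma E_bound:
  fixes R :: "'a set" and w :: "'a \<Rightarrow> real"
  assumes k: "k \<ge> 2" and R: "finite R" "card R = k" and w0: "\<And>i. i \<in> R \<Longrightarrow> w i \<ge> 0"
    and ws: "(\<Sum>i\<in>R. w i) = 1" and p: "p > 1"
  shows "(p - 1) * (- (\<Sum>i\<in>R. xl (w i))) + (\<Sum>i\<in>R. xl (1 - w i)) \<le> max 0 (ek p k)"
proof -
  define H where "H = - (\<Sum>i\<in>R. xl (w i))"
  define Q where "Q = (\<Sum>i\<in>R. xl (1 - w i))"
  define L where "L = ln (real k)"
  define c where "c = cc (real k)"
  have wle: "w i \<le> 1" if "i \<in> R" for i
    using member_le_sum[of i R w] that w0 R ws by auto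
  have L0: "L > 0" using k by (simp add: L_def)
  have key: "L * (- Q) \<ge> c * H"
  proof -
    have "(\<Sum>i\<in>R. chi (real k) (w i)) \<ge> 0" by (rule key_chi[OF k R w0 ws])
    moreover have "(\<Sum>i\<in>R. chi (real k) (w i)) = - L * Q - c * H"
      by (simp add: chi_def L_def Q_def c_def H_def sum_subtractf sum_distrib_left sum_negf)
    ultimately show ?thesis by simp
  qed
  have H0: "H \<ge> 0" unfolding H_def using xl_nonpos w0 wle by (simp add: sum_nonpos)
  have HL: "H \<le> L" unfolding H_def L_def by (rule entropy_le[OF R _ w0 ws]) (use k in auto)
  have "L * ((p - 1) * H + Q) = (p - 1) * H * L + L * Q" by (simp add: algebra_simps)
  also have "\<dots> \<le> (p - 1) * H * L - c * H" using key by simp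
  also have "\<dots> = H * ((p - 1) * L - c)" by (simp add: algebra_simps)
  also have "\<dots> \<le> L * max 0 (ek p k)"
  proof (cases "(p - 1) * L - c \<le> 0")
    case True
    then have "H * ((p - 1) * L - c) \<le> 0" using H0 by (simp add: mult_nonneg_nonpos)
    also have "0 \<le> L * max 0 (ek p k)" using L0 by simp
    finally show ?thesis .
  next
    case False
    have "H * ((p - 1) * L - c) \<le> L * ((p - 1) * L - c)" using HL False by (intro mult_right_mono) auto
    also have "\<dots> \<le> L * max 0 (ek p k)" using L0 by (simp add: ek_def L_def c_def)
    finally show ?thesis .
  qed
  finally have "L * ((p - 1) * H + Q) \<le> L * max 0 (ek p k)" .
  then show ?thesis using L0 by (simp add: H_def Q_def)
qed

lemma binary_gibbs:
  fixes w x :: real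
  assumes w: "0 \<le> w" "w \<le> 1" and x: "0 \<le> x" "x < 1" and wx: "w > 0 \<Longrightarrow> x > 0"
  shows "w * ln x + (1 - w) * ln (1 - x) \<le> xl w + xl (1 - w)"
proof -
  consider "w = 0" | "w = 1" | "0 < w" "w < 1" using w by linarith
  then show ?thesis
  proof cases
    case 1
    have "ln (1 - x) \<le> 0" using x by simp
    then show ?thesis using 1 by simp
  next
    case 2
    then have "x > 0" using wx by simp
    then have "ln x \<le> 0" using x by simp
    then show ?thesis using 2 by simp
  next
    case 3
    then have xp: "x > 0" using wx by simp
    have a: "ln (x / w) \<le> x / w - 1" using xp 3 by (intro ln_le_minus_one) auto
    have b: "ln ((1 - x) / (1 - w)) \<le> (1 - x) / (1 - w) - 1" using x 3 by (intro ln_le_minus_one) auto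
    have "w * ln (x / w) + (1 - w) * ln ((1 - x) / (1 - w)) \<le> w * (x / w - 1) + (1 - w) * ((1 - x) / (1 - w) - 1)"
      using a b 3 by (intro add_mono mult_left_mono) auto
    also have "\<dots> = 0" using 3 by (simp add: field_simps)
    finally have "w * ln (x / w) + (1 - w) * ln ((1 - x) / (1 - w)) \<le> 0" .
    moreover have "ln (x / w) = ln x - ln w" using xp 3 by (simp add: ln_div)
    moreover have "ln ((1 - x) / (1 - w)) = ln (1 - x) - ln (1 - w)" using x 3 by (simp add: ln_div)
    ultimately show ?thesis by (simp add: xl_def algebra_simps)
  qed
qed

lemma powr_unit: fixes t p :: real shows "0 \<le> t \<Longrightarrow> t \<le> 1 \<Longrightarrow> p > 0 \<Longrightarrow> 0 \<le> t powr (1 / p) \<and> t powr (1 / p) \<le> 1"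
  using powr_mono2[of "1/p" t 1] by auto

lemma MM_ge1: "MM p k \<ge> 1" by (simp add: MM_def)

lemma weighted_double_sum:
  fixes R :: "'a set" and w f :: "'a \<Rightarrow> real"
  assumes R: "finite R" and ws: "(\<Sum>i\<in>R. w i) = 1"
  shows "(\<Sum>i\<in>R. w i * (\<Sum>l\<in>R - {i}. f l)) = (\<Sum>i\<in>R. (1 - w i) * f i)"
proof -
  have "(\<Sum>i\<in>R. w i * (\<Sum>l\<in>R - {i}. f l)) = (\<Sum>i\<in>R. w i * ((\<Sum>l\<in>R. f l) - f i))"
    using R by (intro sum.cong) (auto simp: sum_diff1)
  also have "\<dots> = (\<Sum>i\<in>R. w i * (\<Sum>l\<in>R. f l)) - (\<Sum>i\<in>R. w i * f i)"
    by (simp add: right_diff_distrib sum_subtractf)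
  also have "\<dots> = (\<Sum>i\<in>R. w i) * (\<Sum>l\<in>R. f l) - (\<Sum>i\<in>R. w i * f i)"
    by (simp add: sum_distrib_right)
  also have "\<dots> = (\<Sum>i\<in>R. (1 - w i) * f i)" using ws by (simp add: algebra_simps sum_subtractf)
  finally show ?thesis .
qed

lemma col_bound:
  fixes R :: "'a set" and x :: "'a \<Rightarrow> real"
  assumes p: "p > 1" and R: "finite R" "card R = k" "k \<ge> 1"
    and x: "\<And>i. i \<in> R \<Longrightarrow> 0 \<le> x i \<and> x i \<le> 1"
  shows "(\<Sum>i\<in>R. x i powr (1 / p) * (\<Prod>l\<in>R - {i}. (1 - x l) powr (1 / p))) \<le> MM p k"
proof -
  define a where "a i = x i powr (1 / p) * (\<Prod>l\<in>R - {i}. (1 - x l) powr (1 / p))" for i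
  have p0: "p > 0" using p by simp
  have pu: "0 \<le> t powr (1 / p) \<and> t powr (1 / p) \<le> 1" if "0 \<le> t" "t \<le> 1" for t
    using powr_unit[OF that p0] .
  have a01: "0 \<le> a i \<and> a i \<le> 1" if i: "i \<in> R" for i
  proof -
    have f: "0 \<le> (1 - x l) powr (1 / p) \<and> (1 - x l) powr (1 / p) \<le> 1" if "l \<in> R" for l
      using pu[of "1 - x l"] x[OF that] by auto
    have "0 \<le> (\<Prod>l\<in>R - {i}. (1 - x l) powr (1 / p))" using f by (intro prod_nonneg) auto
    moreover have "(\<Prod>l\<in>R - {i}. (1 - x l) powr (1 / p)) \<le> 1" using f by (intro prod_le_1) auto
    ultimately show ?thesis unfolding a_def using pu[of "x i"] x[OF i] by (auto intro: mult_le_one)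
  qed
  show ?thesis
  proof (cases "k = 1")
    case True
    then obtain i where Ri: "R = {i}" using R card_1_singletonE by blast
    have "(\<Sum>i\<in>R. a i) \<le> 1" using a01[of i] Ri by simp
    then show ?thesis using MM_ge1[of p k] by (simp add: a_def)
  next
    case False
    then have k2: "k \<ge> 2" using R by simp
    show ?thesis
    proof (cases "\<exists>i\<in>R. x i = 1")
      case True
      then obtain i where i: "i \<in> R" "x i = 1" by auto
      have "a j = 0" if j: "j \<in> R - {i}" for j
      proof -
        have "(\<Prod>l\<in>R - {j}. (1 - x l) powr (1 / p)) = 0"
          using R j i by (intro prod_zero) (auto intro!: bexI[of _ i])
        then show ?thesis by (simp add: a_def)
      qed
      then have "(\<Sum>i\<in>R. a i) = a i" using sum.remove[OF R(1) i(1), of a] by simp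
      then show ?thesis using a01[OF i(1)] MM_ge1[of p k] by (simp add: a_def)
    next
      case False
      then have x1: "x i < 1" if "i \<in> R" for i using x[OF that] that by force
      define G where "G = (\<Sum>i\<in>R. a i)"
      have G0: "G \<ge> 0" unfolding G_def using a01 by (simp add: sum_nonneg)
      show ?thesis
      proof (cases "G = 0")
        case True then show ?thesis using MM_ge1[of p k] by (simp add: G_def a_def)
      next
        case False
        then have Gp: "G > 0" using G0 by simp
        define w where "w i = a i / G" for i
        have w0: "w i \<ge> 0" if "i \<in> R" for i using a01[OF that] Gp by (simp add: w_def)
        have ws: "(\<Sum>i\<in>R. w i) = 1" using Gp by (simp add: w_def G_def sum_divide_distrib[symmetric])
        have wle: "w i \<le> 1" if "i \<in> R" for i
          using member_le_sum[of i R w] that w0 R ws by auto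
        have xpos: "x i > 0" if "i \<in> R" "w i > 0" for i
        proof -
          have "a i > 0" using that Gp by (simp add: w_def zero_less_divide_iff)
          then have "x i powr (1 / p) \<noteq> 0" by (auto simp: a_def)
          then show ?thesis using x[OF that(1)] by (cases "x i = 0") auto
        qed
        have tm: "w i * (p * ln G) = w i * (ln (x i) + (\<Sum>l\<in>R - {i}. ln (1 - x l))) - p * xl (w i)"
          if i: "i \<in> R" for i
        proof (cases "w i = 0")
          case True then show ?thesis by (simp add: xl_def)
        next
          case False
          then have wp: "w i > 0" using w0[OF i] by simp
          have xp: "x i > 0" using xpos[OF i wp] .
          have ap: "a i > 0" using wp Gp by (simp add: w_def zero_less_divide_iff)
          have "ln G = ln (a i / w i)" using ap Gp by (simp add: w_def)
          also have "\<dots> = ln (a i) - ln (w i)" using ap wp by (simp add: ln_div)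
          finally have lg: "ln G = ln (a i) - ln (w i)" .
          have nz: "(1 - x l) powr (1 / p) \<noteq> 0" if "l \<in> R - {i}" for l
          proof -
            have "x l < 1" using x1 that by blast
            then show ?thesis by simp
          qed
          have pz: "(\<Prod>l\<in>R - {i}. (1 - x l) powr (1 / p)) > 0"
          proof (rule prod_pos)
            fix l assume "l \<in> R - {i}"
            then have "x l < 1" using x1 by blast
            then show "(1 - x l) powr (1 / p) > 0" by simp
          qed
          have "ln (a i) = ln (x i powr (1 / p)) + ln (\<Prod>l\<in>R - {i}. (1 - x l) powr (1 / p))"
            unfolding a_def using xp pz by (simp add: ln_mult)
          also have "\<dots> = (1 / p) * ln (x i) + (\<Sum>l\<in>R - {i}. (1 / p) * ln (1 - x l))"
          proof -
            have "ln (\<Prod>l\<in>R - {i}. (1 - x l) powr (1 / p)) = (\<Sum>l\<in>R - {i}. ln ((1 - x l) powr (1 / p)))"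
              using R(1) nz by (intro ln_prod) auto
            then show ?thesis by (simp add: ln_powr)
          qed
          finally have la: "ln (a i) = (1 / p) * ln (x i) + (1 / p) * (\<Sum>l\<in>R - {i}. ln (1 - x l))"
            by (simp add: sum_distrib_left)
          have "p * ln (a i) = ln (x i) + (\<Sum>l\<in>R - {i}. ln (1 - x l))"
            unfolding la using p0 by (simp add: algebra_simps)
          moreover have "w i * (p * ln G) = w i * (p * ln (a i)) - p * (w i * ln (w i))"
            unfolding lg by (simp add: algebra_simps)
          ultimately show ?thesis by (simp add: xl_def)
        qed
        have "p * ln G = (\<Sum>i\<in>R. w i) * (p * ln G)" using ws by simp
        also have "\<dots> = (\<Sum>i\<in>R. w i * (ln (x i) + (\<Sum>l\<in>R - {i}. ln (1 - x l))) - p * xl (w i))"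
          by (simp add: sum_distrib_right tm)
        also have "\<dots> = (\<Sum>i\<in>R. w i * ln (x i)) + (\<Sum>i\<in>R. w i * (\<Sum>l\<in>R - {i}. ln (1 - x l))) - p * (\<Sum>i\<in>R. xl (w i))"
          by (simp add: sum_subtractf sum.distrib distrib_left sum_distrib_left)
        also have "\<dots> = (\<Sum>i\<in>R. w i * ln (x i) + (1 - w i) * ln (1 - x i)) - p * (\<Sum>i\<in>R. xl (w i))"
          using weighted_double_sum[OF R(1) ws, of "\<lambda>l. ln (1 - x l)"] by (simp add: sum.distrib)
        also have "\<dots> \<le> (\<Sum>i\<in>R. xl (w i) + xl (1 - w i)) - p * (\<Sum>i\<in>R. xl (w i))"
        proof -
          have "(\<Sum>i\<in>R. w i * ln (x i) + (1 - w i) * ln (1 - x i)) \<le> (\<Sum>i\<in>R. xl (w i) + xl (1 - w i))"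
            by (rule sum_mono, rule binary_gibbs) (use w0 wle x x1 xpos in auto)
          then show ?thesis by simp
        qed
        also have "\<dots> = (p - 1) * (- (\<Sum>i\<in>R. xl (w i))) + (\<Sum>i\<in>R. xl (1 - w i))"
          by (simp add: sum.distrib algebra_simps)
        also have "\<dots> \<le> max 0 (ek p k)" by (rule E_bound[OF k2 R(1,2) w0 ws p])
        finally have lnG: "ln G \<le> max 0 (ek p k) / p" using p0 by (simp add: field_simps)
        have "G = exp (ln G)" using Gp by simp
        also have "\<dots> \<le> exp (max 0 (ek p k) / p)" using lnG by simp
        also have "\<dots> \<le> MM p k"
          by (cases "ek p k \<le> 0") (auto simp: MM_def rr_def max_def)
        finally show ?thesis by (simp add: G_def a_def)
      qed
    qed
  qed
qed

definition bijs :: "nat set \<Rightarrow> nat set \<Rightarrow> (nat \<Rightarrow> nat) set" where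
  "bijs R C = {\<sigma>. bij_betw \<sigma> R C \<and> (\<forall>x. x \<notin> R \<longrightarrow> \<sigma> x = x)}"

definition pm :: "nat set \<Rightarrow> nat set \<Rightarrow> (nat \<Rightarrow> nat \<Rightarrow> real) \<Rightarrow> real" where
  "pm R C A = (\<Sum>\<sigma>\<in>bijs R C. \<Prod>i\<in>R. A i (\<sigma> i))"

lemma finite_bijs: assumes "finite R" "finite C" shows "finite (bijs R C)"
proof -
  have "bijs R C \<subseteq> (\<lambda>f x. if x \<in> R then f x else x) ` (R \<rightarrow>\<^sub>E C)"
  proof
    fix \<sigma> assume s: "\<sigma> \<in> bijs R C"
    then have "restrict \<sigma> R \<in> R \<rightarrow>\<^sub>E C" by (auto simp: bijs_def bij_betw_def)
    moreover have "\<sigma> = (\<lambda>x. if x \<in> R then restrict \<sigma> R x else x)" using s by (auto simp: bijs_def fun_eq_iff)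
    ultimately show "\<sigma> \<in> (\<lambda>f x. if x \<in> R then f x else x) ` (R \<rightarrow>\<^sub>E C)" by blast
  qed
  moreover have "finite (R \<rightarrow>\<^sub>E C)" using assms by (simp add: finite_PiE)
  ultimately show ?thesis using finite_subset by blast
qed

lemma per_pm: "per n A = pm {..<n} {..<n} A"
proof -
  have "{\<sigma>. \<sigma> permutes {..<n}} = bijs {..<n} {..<n}"
    by (auto simp: bijs_def permutes_imp_bij permutes_not_in intro: bij_imp_permutes)
  then show ?thesis by (simp add: per_def pm_def)
qed

lemma pm_empty: "pm {} {} A = 1"
proof -
  have "bijs {} {} = {id}" by (auto simp: bijs_def fun_eq_iff)
  then show ?thesis by (simp add: pm_def)
qed

lemma pm_expand:
  assumes R: "finite R" "i \<in> R" and C: "finite C"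
  shows "pm R C A = (\<Sum>j\<in>C. A i j * pm (R - {i}) (C - {j}) A)"
proof -
  have part: "bijs R C = (\<Union>j\<in>C. {\<sigma>\<in>bijs R C. \<sigma> i = j})"
    using R by (auto simp: bijs_def bij_betw_def)
  have "pm R C A = (\<Sum>j\<in>C. \<Sum>\<sigma>\<in>{\<sigma>\<in>bijs R C. \<sigma> i = j}. \<Prod>l\<in>R. A l (\<sigma> l))"
    unfolding pm_def
    by (subst part, rule sum.UNION_disjoint) (use C finite_bijs[OF R(1) C] in auto)
  also have "\<dots> = (\<Sum>j\<in>C. A i j * pm (R - {i}) (C - {j}) A)"
  proof (rule sum.cong[OF refl])
    fix j assume j: "j \<in> C"
    have "(\<Sum>\<sigma>\<in>{\<sigma>\<in>bijs R C. \<sigma> i = j}. \<Prod>l\<in>R. A l (\<sigma> l))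
        = (\<Sum>\<tau>\<in>bijs (R - {i}) (C - {j}). A i j * (\<Prod>l\<in>R - {i}. A l (\<tau> l)))"
    proof (rule sum.reindex_bij_witness[where i = "\<lambda>\<tau>. \<tau>(i := j)" and j = "\<lambda>\<sigma>. \<sigma>(i := i)"])
      fix \<sigma> assume s: "\<sigma> \<in> {\<sigma>\<in>bijs R C. \<sigma> i = j}"
      then show "(\<sigma>(i := i))(i := j) = \<sigma>" by auto
      have b: "bij_betw \<sigma> R C" and o: "\<forall>x. x \<notin> R \<longrightarrow> \<sigma> x = x" and si: "\<sigma> i = j"
        using s by (auto simp: bijs_def)
      have bij1: "bij_betw \<sigma> {i} {j}" using si by (simp add: bij_betw_def)
      have jC: "j \<in> C" using b R si by (auto simp: bij_betw_def)
      have "bij_betw \<sigma> (R - {i}) (C - {j})"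
        by (rule bij_betw_DiffI[OF b bij1]) (use R jC in auto)
      then have "bij_betw (\<sigma>(i := i)) (R - {i}) (C - {j})"
        by (rule bij_betw_cong[THEN iffD1, rotated]) auto
      then show "\<sigma>(i := i) \<in> bijs (R - {i}) (C - {j})" using o by (auto simp: bijs_def)
      have "(\<Prod>l\<in>R. A l (\<sigma> l)) = A i (\<sigma> i) * (\<Prod>l\<in>R - {i}. A l (\<sigma> l))"
        using prod.remove[OF R] by simp
      also have "(\<Prod>l\<in>R - {i}. A l (\<sigma> l)) = (\<Prod>l\<in>R - {i}. A l ((\<sigma>(i := i)) l))"
        by (rule prod.cong) auto
      finally show "A i j * (\<Prod>l\<in>R - {i}. A l ((\<sigma>(i := i)) l)) = (\<Prod>l\<in>R. A l (\<sigma> l))" using si by simp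
    next
      fix \<tau> assume t: "\<tau> \<in> bijs (R - {i}) (C - {j})"
      have b: "bij_betw \<tau> (R - {i}) (C - {j})" and o: "\<forall>x. x \<notin> R - {i} \<longrightarrow> \<tau> x = x"
        using t by (auto simp: bijs_def)
      then show "(\<tau>(i := j))(i := i) = \<tau>" by (auto simp: fun_eq_iff)
      have b1: "bij_betw (\<tau>(i := j)) (R - {i}) (C - {j})"
        using b by (rule bij_betw_cong[THEN iffD1, rotated]) auto
      have b2: "bij_betw (\<tau>(i := j)) {i} {j}" by (simp add: bij_betw_def)
      have "bij_betw (\<tau>(i := j)) ((R - {i}) \<union> {i}) ((C - {j}) \<union> {j})"
        by (rule bij_betw_combine[OF b1 b2]) auto
      moreover have "(R - {i}) \<union> {i} = R" "(C - {j}) \<union> {j} = C" using R j by auto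
      ultimately have "bij_betw (\<tau>(i := j)) R C" by simp
      then show "\<tau>(i := j) \<in> {\<sigma>\<in>bijs R C. \<sigma> i = j}" using o R by (auto simp: bijs_def)
    qed
    also have "\<dots> = A i j * pm (R - {i}) (C - {j}) A"
      by (simp add: pm_def sum_distrib_left)
    finally show "(\<Sum>\<sigma>\<in>{\<sigma>\<in>bijs R C. \<sigma> i = j}. \<Prod>l\<in>R. A l (\<sigma> l)) = A i j * pm (R - {i}) (C - {j}) A" .
  qed
  finally show ?thesis .
qed

lemma pm_abs: "\<bar>pm R C A\<bar> \<le> pm R C (\<lambda>i j. \<bar>A i j\<bar>)"
  unfolding pm_def
  by (rule order_trans[OF sum_abs]) (simp add: abs_prod)

lemma pm_zero_row:
  assumes "i \<in> R" "\<And>j. j \<in> C \<Longrightarrow> A i j = 0" "finite R"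
  shows "pm R C A = 0"
  unfolding pm_def
proof (rule sum.neutral, rule ballI)
  fix \<sigma> assume "\<sigma> \<in> bijs R C"
  then have "\<sigma> i \<in> C" using assms(1) by (auto simp: bijs_def bij_betw_def)
  then show "(\<Prod>l\<in>R. A l (\<sigma> l)) = 0" using assms by (intro prod_zero) auto
qed

lemma pm_nonneg: "(\<And>i j. A i j \<ge> 0) \<Longrightarrow> pm R C A \<ge> 0"
  unfolding pm_def by (intro sum_nonneg prod_nonneg) auto

definition NN :: "real \<Rightarrow> nat set \<Rightarrow> (nat \<Rightarrow> nat \<Rightarrow> real) \<Rightarrow> nat \<Rightarrow> real" where
  "NN p C A i = (\<Sum>j\<in>C. A i j powr p) powr (1 / p)"

definition Bk :: "real \<Rightarrow> nat \<Rightarrow> real" where "Bk p k = (\<Prod>j\<in>{1..k}. MM p j)"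

lemma Bk_Suc: "Bk p (Suc k) = Bk p k * MM p (Suc k)"
  by (simp add: Bk_def prod.nat_ivl_Suc' mult.commute)

lemma Bk_nonneg: "Bk p k \<ge> 0"
  unfolding Bk_def using MM_ge1 by (intro prod_nonneg) (auto intro: order_trans[OF zero_le_one])

lemma NN_nonneg: "NN p C A i \<ge> 0" by (simp add: NN_def)

lemma entry_identity:
  fixes p :: real and A :: "nat \<Rightarrow> nat \<Rightarrow> real"
  assumes p: "p > 1" and A0: "\<And>i j. A i j \<ge> 0" and R: "finite R" "i \<in> R" and C: "finite C" "j \<in> C"
    and Spos: "\<And>l. l \<in> R \<Longrightarrow> (\<Sum>j\<in>C. A l j powr p) > 0"
    and x_def: "\<And>l. x l = A l j powr p / (\<Sum>j\<in>C. A l j powr p)"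
  shows "A i j * (\<Prod>l\<in>R - {i}. NN p (C - {j}) A l)
       = (\<Prod>l\<in>R. NN p C A l) * (x i powr (1 / p) * (\<Prod>l\<in>R - {i}. (1 - x l) powr (1 / p)))"
proof -
  define S where "S l = (\<Sum>j\<in>C. A l j powr p)" for l
  have x_def': "x l = A l j powr p / S l" for l by (simp add: x_def S_def)
  have p0: "p > 0" using p by simp
  have e1: "NN p (C - {j}) A l = NN p C A l * (1 - x l) powr (1 / p)" if l: "l \<in> R" for l
  proof -
    have Sl: "S l > 0" using Spos[OF l] by (simp add: S_def)
    have "(\<Sum>j'\<in>C - {j}. A l j' powr p) = S l - A l j powr p" using C by (simp add: S_def sum_diff1)
    also have "\<dots> = S l * (1 - x l)" using Sl by (simp add: x_def' field_simps)
    finally have "NN p (C - {j}) A l = (S l * (1 - x l)) powr (1 / p)" by (simp add: NN_def)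
    also have "\<dots> = S l powr (1 / p) * (1 - x l) powr (1 / p)"
    proof -
      have "x l \<le> 1" using Sl member_le_sum[of j C "\<lambda>j. A l j powr p"] C by (simp add: x_def' S_def)
      then show ?thesis using Sl by (simp add: powr_mult)
    qed
    finally show ?thesis by (simp add: NN_def S_def)
  qed
  have e2: "A i j = NN p C A i * x i powr (1 / p)"
  proof -
    have Si: "S i > 0" using Spos[OF R(2)] by (simp add: S_def)
    have "A i j = (A i j powr p) powr (1 / p)" using A0[of i j] p0 by (simp add: powr_powr)
    also have "A i j powr p = S i * x i" using Si by (simp add: x_def')
    also have "(S i * x i) powr (1 / p) = S i powr (1 / p) * x i powr (1 / p)"
      by (rule powr_mult)
    finally show ?thesis by (simp add: NN_def S_def)
  qed
  have "A i j * (\<Prod>l\<in>R - {i}. NN p (C - {j}) A l)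
      = NN p C A i * x i powr (1 / p) * (\<Prod>l\<in>R - {i}. NN p C A l * (1 - x l) powr (1 / p))"
  proof -
    have "(\<Prod>l\<in>R - {i}. NN p (C - {j}) A l) = (\<Prod>l\<in>R - {i}. NN p C A l * (1 - x l) powr (1 / p))"
      by (rule prod.cong) (auto simp: e1)
    then show ?thesis using e2 by simp
  qed
  also have "\<dots> = (NN p C A i * (\<Prod>l\<in>R - {i}. NN p C A l)) * (x i powr (1 / p) * (\<Prod>l\<in>R - {i}. (1 - x l) powr (1 / p)))"
    by (simp add: prod.distrib algebra_simps)
  also have "NN p C A i * (\<Prod>l\<in>R - {i}. NN p C A l) = (\<Prod>l\<in>R. NN p C A l)"
    using prod.remove[OF R, of "NN p C A"] by simp
  finally show ?thesis .
qed

lemma pm_bound: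
  fixes p :: real and A :: "nat \<Rightarrow> nat \<Rightarrow> real"
  assumes p: "p > 1" and A0: "\<And>i j. A i j \<ge> 0"
  shows "finite R \<Longrightarrow> finite C \<Longrightarrow> card R = k \<Longrightarrow> card C = k \<Longrightarrow> pm R C A \<le> Bk p k * (\<Prod>i\<in>R. NN p C A i)"
proof (induction k arbitrary: R C)
  case 0
  then have "R = {}" "C = {}" by auto
  then show ?case by (simp add: pm_empty Bk_def)
next
  case (Suc k)
  note R = Suc.prems(1) and C = Suc.prems(2) and cR = Suc.prems(3) and cC = Suc.prems(4)
  have p0: "p > 0" using p by simp
  show ?case
  proof (cases "\<exists>i\<in>R. NN p C A i = 0")
    case True
    then obtain i where i: "i \<in> R" "NN p C A i = 0" by auto
    then have "(\<Sum>j\<in>C. A i j powr p) = 0" by (simp add: NN_def)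
    then have "\<forall>j\<in>C. A i j powr p = 0" using sum_nonneg_eq_0_iff[OF C, of "\<lambda>j. A i j powr p"] by simp
    then have "\<forall>j\<in>C. A i j = 0" by simp
    then have "pm R C A = 0" using pm_zero_row[OF i(1) _ R] by auto
    moreover have "Bk p (Suc k) * (\<Prod>i\<in>R. NN p C A i) \<ge> 0"
      using Bk_nonneg NN_nonneg by (intro mult_nonneg_nonneg prod_nonneg) auto
    ultimately show ?thesis by simp
  next
    case False
    have Spos: "(\<Sum>j\<in>C. A l j powr p) > 0" if l: "l \<in> R" for l
    proof -
      have "NN p C A l \<noteq> 0" using False l by auto
      then have "(\<Sum>j\<in>C. A l j powr p) \<noteq> 0" by (auto simp: NN_def)
      moreover have "(\<Sum>j\<in>C. A l j powr p) \<ge> 0" by (simp add: sum_nonneg)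
      ultimately show ?thesis by simp
    qed
    define x where "x j l = A l j powr p / (\<Sum>j\<in>C. A l j powr p)" for j l
    define PN where "PN = (\<Prod>l\<in>R. NN p C A l)"
    have PN0: "PN \<ge> 0" unfolding PN_def using NN_nonneg by (intro prod_nonneg) auto
    define K where "K = real (Suc k)"
    have Kp: "K > 0" by (simp add: K_def)
    have row: "pm R C A \<le> Bk p k * PN * (\<Sum>j\<in>C. x j i powr (1 / p) * (\<Prod>l\<in>R - {i}. (1 - x j l) powr (1 / p)))"
      if i: "i \<in> R" for i
    proof -
      have "pm R C A = (\<Sum>j\<in>C. A i j * pm (R - {i}) (C - {j}) A)" by (rule pm_expand[OF R i C])
      also have "\<dots> \<le> (\<Sum>j\<in>C. A i j * (Bk p k * (\<Prod>l\<in>R - {i}. NN p (C - {j}) A l)))"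
      proof (rule sum_mono, rule mult_left_mono)
        fix j assume j: "j \<in> C"
        show "pm (R - {i}) (C - {j}) A \<le> Bk p k * (\<Prod>l\<in>R - {i}. NN p (C - {j}) A l)"
          by (rule Suc.IH) (use R C cR cC i j in auto)
        show "A i j \<ge> 0" by (rule A0)
      qed
      also have "\<dots> = (\<Sum>j\<in>C. Bk p k * (A i j * (\<Prod>l\<in>R - {i}. NN p (C - {j}) A l)))"
        by (simp add: algebra_simps)
      also have "\<dots> = (\<Sum>j\<in>C. Bk p k * (PN * (x j i powr (1 / p) * (\<Prod>l\<in>R - {i}. (1 - x j l) powr (1 / p)))))"
      proof (rule sum.cong[OF refl])
        fix j assume j: "j \<in> C"
        show "Bk p k * (A i j * (\<Prod>l\<in>R - {i}. NN p (C - {j}) A l)) = Bk p k * (PN * (x j i powr (1 / p) * (\<Prod>l\<in>R - {i}. (1 - x j l) powr (1 / p))))"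
        proof -
          have ei: "A i j * (\<Prod>l\<in>R - {i}. NN p (C - {j}) A l) = PN * (x j i powr (1 / p) * (\<Prod>l\<in>R - {i}. (1 - x j l) powr (1 / p)))"
            unfolding PN_def by (rule entry_identity[OF p A0 R i C j]) (auto intro: Spos simp: x_def)
          then show ?thesis by simp
        qed
      qed
      also have "\<dots> = Bk p k * PN * (\<Sum>j\<in>C. x j i powr (1 / p) * (\<Prod>l\<in>R - {i}. (1 - x j l) powr (1 / p)))"
        by (simp add: sum_distrib_left algebra_simps)
      finally show ?thesis .
    qed
    have "K * pm R C A = (\<Sum>i\<in>R. pm R C A)" using cR by (simp add: K_def)
    also have "\<dots> \<le> (\<Sum>i\<in>R. Bk p k * PN * (\<Sum>j\<in>C. x j i powr (1 / p) * (\<Prod>l\<in>R - {i}. (1 - x j l) powr (1 / p))))"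
      by (rule sum_mono) (rule row)
    also have "\<dots> = Bk p k * PN * (\<Sum>j\<in>C. \<Sum>i\<in>R. x j i powr (1 / p) * (\<Prod>l\<in>R - {i}. (1 - x j l) powr (1 / p)))"
      by (simp add: sum_distrib_left[symmetric] sum.swap[of _ R C])
    also have "\<dots> \<le> Bk p k * PN * (\<Sum>j\<in>C. MM p (Suc k))"
    proof (rule mult_left_mono, rule sum_mono)
      fix j assume j: "j \<in> C"
      have x01: "0 \<le> x j l \<and> x j l \<le> 1" if l: "l \<in> R" for l
      proof -
        have "A l j powr p \<le> (\<Sum>j\<in>C. A l j powr p)" using member_le_sum[of j C "\<lambda>j. A l j powr p"] C j by simp
        then show ?thesis using Spos[OF l] by (simp add: x_def)
      qed
      show "(\<Sum>i\<in>R. x j i powr (1 / p) * (\<Prod>l\<in>R - {i}. (1 - x j l) powr (1 / p))) \<le> MM p (Suc k)"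
        by (rule col_bound[OF p R cR]) (use x01 in auto)
    next
      show "0 \<le> Bk p k * PN" using Bk_nonneg PN0 by simp
    qed
    also have "\<dots> = K * (Bk p (Suc k) * PN)" using cC by (simp add: K_def Bk_Suc algebra_simps)
    finally have "K * pm R C A \<le> K * (Bk p (Suc k) * PN)" .
    then show ?thesis using Kp by (simp add: PN_def)
  qed
qed

lemma ln_fact_lower: "m \<ge> 1 \<Longrightarrow> ln (fact m) \<ge> real m * ln (real m) - real m + 1"
proof (induction m rule: dec_induct)
  case base then show ?case by simp
next
  case (step m)
  have m: "real m \<ge> 1" using step by simp
  have "real m * ln (1 + 1 / real m) \<le> real m * (1 / real m)"
    using m by (intro mult_left_mono ln_add_one_self_le_self) auto
  moreover have "ln (1 + 1 / real m) = ln (real m + 1) - ln (real m)"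
  proof -
    have "1 + 1 / real m = (real m + 1) / real m" using m by (simp add: field_simps)
    then show ?thesis using m by (simp add: ln_div)
  qed
  ultimately have a: "real m * ln (real m + 1) \<le> real m * ln (real m) + 1" using m by (simp add: algebra_simps)
  have "ln (fact (Suc m)) = ln (real m + 1) + ln (fact m)"
    by (simp add: ln_mult add.commute)
  then show ?case using step.IH a by (simp add: algebra_simps)
qed

lemma phi_bound:
  fixes t x :: real assumes t: "t > 0" and x: "x > 0"
  shows "x + t * x - t * x * ln x \<le> t * exp (1 / t)"
proof -
  have "ln (exp (1 / t) / x) \<le> exp (1 / t) / x - 1" using x by (intro ln_le_minus_one) auto
  moreover have "ln (exp (1 / t) / x) = 1 / t - ln x" using x by (simp add: ln_div)
  ultimately have "1 / t - ln x \<le> exp (1 / t) / x - 1" by simp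
  then have "t * x * (1 / t - ln x) \<le> t * x * (exp (1 / t) / x - 1)" using t x by (intro mult_left_mono) auto
  moreover have "t * x * (1 / t - ln x) = x - t * x * ln x" using t by (simp add: field_simps)
  moreover have "t * x * (exp (1 / t) / x - 1) = t * exp (1 / t) - t * x" using x by (simp add: field_simps)
  ultimately show ?thesis by simp
qed

lemma T_bound:
  fixes t :: real assumes t: "t > 0"
  shows "real m - t * ln (fact m) \<le> t * exp (1 / t)"
proof (cases "m = 0")
  case True then show ?thesis using t by simp
next
  case False
  then have m: "m \<ge> 1" by simp
  have "real m - t * ln (fact m) \<le> real m - t * (real m * ln (real m) - real m + 1)"
    using ln_fact_lower[OF m] t by (simp add: mult_left_mono)
  also have "\<dots> \<le> real m + t * real m - t * real m * ln (real m)" using t by (simp add: algebra_simps)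
  also have "\<dots> \<le> t * exp (1 / t)" using phi_bound[OF t, of "real m"] m by simp
  finally show ?thesis .
qed

lemma S_bound:
  fixes t :: real assumes t: "t > 0"
  shows "(\<Sum>j\<in>{1..n}. max 0 (1 - t * ln (real j))) \<le> t * exp (1 / t) \<and>
         (t * ln (real n) < 1 \<longrightarrow> (\<Sum>j\<in>{1..n}. max 0 (1 - t * ln (real j))) = real n - t * ln (fact n))"
proof (induction n)
  case 0 then show ?case using t by simp
next
  case (Suc n)
  have sumS: "(\<Sum>j\<in>{1..Suc n}. max 0 (1 - t * ln (real j))) = (\<Sum>j\<in>{1..n}. max 0 (1 - t * ln (real j))) + max 0 (1 - t * ln (real (Suc n)))"
    by simp
  show ?case
  proof (cases "t * ln (real (Suc n)) < 1")
    case True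
    have "t * ln (real n) \<le> t * ln (real (Suc n))"
      using t by (cases "n = 0") (auto intro!: mult_left_mono)
    then have "t * ln (real n) < 1" using True by simp
    then have e: "(\<Sum>j\<in>{1..n}. max 0 (1 - t * ln (real j))) = real n - t * ln (fact n)" using Suc.IH by simp
    have lf: "ln (fact (Suc n)) = ln (real (Suc n)) + ln (fact n)"
      by (simp add: ln_mult)
    have mx: "max 0 (1 - t * ln (real (Suc n))) = 1 - t * ln (real (Suc n))" using True by simp
    have eq: "(\<Sum>j\<in>{1..Suc n}. max 0 (1 - t * ln (real j))) = real (Suc n) - t * ln (fact (Suc n))"
      unfolding sumS e lf mx by (simp add: algebra_simps)
    show ?thesis unfolding eq using T_bound[OF t, of "Suc n"] by simp
  next
    case False
    then have "max 0 (1 - t * ln (real (Suc n))) = 0" by simp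
    then show ?thesis using sumS Suc.IH False by simp
  qed
qed

lemma sum_ln: "(\<Sum>j\<in>{1..n}. ln (real j)) = ln (fact n)"
proof (induction n)
  case 0 then show ?case by simp
next
  case (Suc n) then show ?case by (simp add: ln_mult add.commute)
qed

lemma cc_sum: "(\<Sum>j\<in>{1..n}. cc (real j)) = real n * ln (real n) - ln (fact n)"
proof (induction n)
  case 0 then show ?case by (simp add: cc_def)
next
  case (Suc n)
  have c: "cc (real (Suc n)) = real n * ln (real n + 1) - real n * ln (real n)"
  proof (cases "n = 0")
    case True then show ?thesis by (simp add: cc_def)
  next
    case False
    then have L: "ln ((real n + 1) / real n) = ln (real n + 1) - ln (real n)" by (simp add: ln_div)
    have "cc (real (Suc n)) = real n * ln ((real n + 1) / real n)" by (simp add: cc_def add.commute)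
    also have "\<dots> = real n * ln (real n + 1) - real n * ln (real n)" unfolding L by (simp add: right_diff_distrib)
    finally show ?thesis .
  qed
  have "(\<Sum>j\<in>{1..Suc n}. cc (real j)) = (\<Sum>j\<in>{1..n}. cc (real j)) + cc (real (Suc n))" by simp
  also have "\<dots> = real n * ln (real n) - ln (fact n) + (real n * ln (real n + 1) - real n * ln (real n))"
    using Suc.IH c by simp
  also have "\<dots> = real (Suc n) * ln (real (Suc n)) - ln (fact (Suc n))"
  proof -
    have lf: "ln (fact (Suc n)) = ln (real (Suc n)) + ln (fact n)" by (simp add: ln_mult)
    show ?thesis unfolding lf by (simp add: algebra_simps add.commute)
  qed
  finally show ?case .
qed

lemma cc_le1: "j \<ge> 1 \<Longrightarrow> cc (real j) \<le> 1"
proof -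
  assume j: "j \<ge> 1"
  show ?thesis
  proof (cases "j = 1")
    case True then show ?thesis by (simp add: cc_def)
  next
    case False
    then have j2: "real j \<ge> 2" using j by simp
    have "ln (real j / (real j - 1)) \<le> real j / (real j - 1) - 1" using j2 by (intro ln_le_minus_one) auto
    then have "(real j - 1) * ln (real j / (real j - 1)) \<le> (real j - 1) * (real j / (real j - 1) - 1)"
      using j2 by (intro mult_left_mono) auto
    also have "\<dots> = 1" using j2 by (simp add: field_simps)
    finally show ?thesis by (simp add: cc_def)
  qed
qed

lemma Bk_bound:
  assumes p: "p > 1" and n: "n \<ge> 1"
  shows "Bk p n \<le> exp ((p - 1) / p * exp (1 / (p - 1))) * (fact n / real n powr (real n / p))"
proof -
  have p0: "p > 0" using p by simp
  have MMe: "MM p j = exp (ek p j / p) * exp (max 0 (- ek p j / p))" for j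
  proof -
    have "MM p j = exp (max 0 (ek p j / p))" by (simp add: MM_def rr_def max_def)
    also have "max 0 (ek p j / p) = ek p j / p + max 0 (- ek p j / p)" by (simp add: max_def)
    finally show ?thesis by (simp add: exp_add)
  qed
  have "Bk p n = (\<Prod>j\<in>{1..n}. exp (ek p j / p)) * (\<Prod>j\<in>{1..n}. exp (max 0 (- ek p j / p)))"
    unfolding Bk_def MMe by (rule prod.distrib)
  also have "\<dots> = exp (\<Sum>j\<in>{1..n}. ek p j / p) * exp (\<Sum>j\<in>{1..n}. max 0 (- ek p j / p))"
    by (simp add: exp_sum)
  also have "(\<Sum>j\<in>{1..n}. ek p j / p) = ln (fact n) - real n / p * ln (real n)"
  proof -
    have "(\<Sum>j\<in>{1..n}. ek p j) = (p - 1) * (\<Sum>j\<in>{1..n}. ln (real j)) - (\<Sum>j\<in>{1..n}. cc (real j))"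
      unfolding ek_def by (simp only: sum_subtractf sum_distrib_left)
    then have "(\<Sum>j\<in>{1..n}. ek p j) = (p - 1) * ln (fact n) - (real n * ln (real n) - ln (fact n))"
      unfolding sum_ln cc_sum .
    then have "(\<Sum>j\<in>{1..n}. ek p j / p) = ((p - 1) * ln (fact n) - (real n * ln (real n) - ln (fact n))) / p"
      by (simp add: sum_divide_distrib[symmetric])
    also have "\<dots> = ln (fact n) - real n / p * ln (real n)" using p0 by (simp add: field_simps)
    finally show ?thesis .
  qed
  also have "exp (ln (fact n) - real n / p * ln (real n)) = fact n / real n powr (real n / p)"
    using n by (simp add: exp_diff powr_def)
  also have "exp (\<Sum>j\<in>{1..n}. max 0 (- ek p j / p)) \<le> exp ((p - 1) / p * exp (1 / (p - 1)))"
  proof -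
    have "(\<Sum>j\<in>{1..n}. max 0 (- ek p j / p)) \<le> (\<Sum>j\<in>{1..n}. max 0 (1 - (p - 1) * ln (real j)) / p)"
    proof (rule sum_mono)
      fix j assume j: "j \<in> {1..n}"
      have "- ek p j \<le> 1 - (p - 1) * ln (real j)" using cc_le1[of j] j by (simp add: ek_def)
      then have "- ek p j / p \<le> (1 - (p - 1) * ln (real j)) / p"
        using divide_right_mono[of "- ek p j" "1 - (p - 1) * ln (real j)" p] p0 by simp
      then have "max 0 (- ek p j / p) \<le> max 0 ((1 - (p - 1) * ln (real j)) / p)"
        by (rule max.mono[OF order_refl])
      moreover have "max 0 ((1 - (p - 1) * ln (real j)) / p) = max 0 (1 - (p - 1) * ln (real j)) / p"
      proof (cases "1 - (p - 1) * ln (real j) \<le> 0")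
        case True
        then have "(1 - (p - 1) * ln (real j)) / p \<le> 0" using p0 by (simp add: divide_nonpos_pos)
        then show ?thesis using True by simp
      next
        case False
        then have "(1 - (p - 1) * ln (real j)) / p > 0" using p0 by simp
        then show ?thesis using False by simp
      qed
      ultimately show "max 0 (- ek p j / p) \<le> max 0 (1 - (p - 1) * ln (real j)) / p" by simp
    qed
    also have "\<dots> = (\<Sum>j\<in>{1..n}. max 0 (1 - (p - 1) * ln (real j))) / p" by (simp add: sum_divide_distrib)
    also have "\<dots> \<le> (p - 1) * exp (1 / (p - 1)) / p"
      using S_bound[of "p - 1" n] p p0 by (intro divide_right_mono) auto
    finally show ?thesis by simp
  qed
  then have "exp (\<Sum>j\<in>{1..n}. max 0 (- ek p j / p)) * (fact n / real n powr (real n / p))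
     \<le> exp ((p - 1) / p * exp (1 / (p - 1))) * (fact n / real n powr (real n / p))"
    by (intro mult_right_mono) auto
  ultimately show ?thesis by (simp add: mult.commute)
qed

lemma per_le_Bk:
  assumes p: "p > 1" and rows: "\<forall>i<n. row_lp_norm n p A i = 1"
  shows "per n A \<le> Bk p n"
proof -
  have "per n A \<le> \<bar>pm {..<n} {..<n} A\<bar>" by (simp add: per_pm)
  also have "\<dots> \<le> pm {..<n} {..<n} (\<lambda>i j. \<bar>A i j\<bar>)" by (rule pm_abs)
  also have "\<dots> \<le> Bk p n * (\<Prod>i\<in>{..<n}. NN p {..<n} (\<lambda>i j. \<bar>A i j\<bar>) i)"
    by (rule pm_bound[OF p]) auto
  also have "(\<Prod>i\<in>{..<n}. NN p {..<n} (\<lambda>i j. \<bar>A i j\<bar>) i) = 1"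
    using rows by (intro prod.neutral) (simp add: NN_def row_lp_norm_def)
  finally show ?thesis by simp
qed

definition Id_mat :: "nat \<Rightarrow> nat \<Rightarrow> real" where "Id_mat i j = (if i = j then 1 else 0)"

lemma per_Id: "per n Id_mat = 1"
proof -
  have "per n Id_mat = (\<Sum>\<sigma>\<in>{\<sigma>. \<sigma> permutes {..<n}}. if \<sigma> = id then 1 else 0)"
    unfolding per_def
  proof (rule sum.cong[OF refl])
    fix \<sigma> assume s: "\<sigma> \<in> {\<sigma>. \<sigma> permutes {..<n}}"
    show "(\<Prod>i<n. Id_mat i (\<sigma> i)) = (if \<sigma> = id then 1 else 0)"
    proof (cases "\<sigma> = id")
      case True then show ?thesis by (simp add: Id_mat_def)
    next
      case False
      then obtain i where i: "\<sigma> i \<noteq> i" by (auto simp: fun_eq_iff)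
      then have "i < n" using s by (auto simp: permutes_def)
      then show ?thesis using False i by (intro prod_zero[THEN trans]) (auto simp: Id_mat_def intro!: bexI[of _ i])
    qed
  qed
  also have "\<dots> = 1" using permutes_id[of "{..<n}"] finite_permutations[of "{..<n}"] by (simp add: sum.delta)
  finally show ?thesis .
qed

lemma row_Id: "i < n \<Longrightarrow> p > 0 \<Longrightarrow> row_lp_norm n p Id_mat i = 1"
proof -
  assume i: "i < n" and p: "p > 0"
  have "(\<Sum>j<n. \<bar>Id_mat i j\<bar> powr p) = (\<Sum>j<n. if i = j then 1 else 0)"
    by (rule sum.cong) (auto simp: Id_mat_def)
  also have "\<dots> = 1" using i by (simp add: sum.delta)
  finally show ?thesis by (simp add: row_lp_norm_def)
qed

definition Un_mat :: "nat \<Rightarrow> real \<Rightarrow> nat \<Rightarrow> nat \<Rightarrow> real" where "Un_mat n p i j = real n powr (- 1 / p)"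

lemma row_Un: "i < n \<Longrightarrow> p > 0 \<Longrightarrow> row_lp_norm n p (Un_mat n p) i = 1"
proof -
  assume i: "i < n" and p: "p > 0"
  have n: "real n > 0" using i by simp
  have "\<bar>real n powr (- 1 / p)\<bar> powr p = real n powr (- 1)"
    using p by (simp add: powr_powr)
  also have "\<dots> = 1 / real n" using n by (simp add: powr_minus_divide)
  finally have "(\<Sum>j<n. \<bar>Un_mat n p i j\<bar> powr p) = real n * (1 / real n)" by (simp add: Un_mat_def)
  then show ?thesis using n by (simp add: row_lp_norm_def)
qed

lemma per_Un: "n \<ge> 1 \<Longrightarrow> per n (Un_mat n p) = fact n / real n powr (real n / p)"
proof -
  assume n: "n \<ge> 1"
  have "per n (Un_mat n p) = (\<Sum>\<sigma>\<in>{\<sigma>. \<sigma> permutes {..<n}}. (real n powr (- 1 / p)) ^ n)"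
    by (simp add: per_def Un_mat_def)
  also have "\<dots> = fact n * (real n powr (- 1 / p)) ^ n"
    using card_permutations[of "{..<n}" n] by simp
  also have "(real n powr (- 1 / p)) ^ n = real n powr (real n * (- 1 / p))"
    using n by (simp add: powr_power)
  also have "\<dots> = 1 / real n powr (real n / p)"
    using n by (simp add: powr_minus_divide[symmetric])
  finally show ?thesis by simp
qed

lemma p_gt1:
  fixes n :: nat and p :: real
  assumes "n \<ge> 2"
    and "(real n * ln (real n) - (real n - 1) * ln (real n - 1)) / ln (real n) \<le> p"
  shows "p > 1"
proof -
  have n: "real n \<ge> 2" using assms by simp
  have ln0: "ln (real n) > 0" using n by simp
  have "ln (real n - 1) < ln (real n)" using n by simp
  then have "(real n - 1) * ln (real n - 1) < (real n - 1) * ln (real n)" using n by simp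
  then have "ln (real n) < real n * ln (real n) - (real n - 1) * ln (real n - 1)" by (simp add: algebra_simps)
  then have "1 < (real n * ln (real n) - (real n - 1) * ln (real n - 1)) / ln (real n)"
    using ln0 by (simp add: field_simps)
  then show ?thesis using assms(2) by linarith
qed

theorem theorem1p3:
  fixes n :: nat and p :: real
  assumes "n \<ge> 2"
    and "(real n * ln (real n) - (real n - 1) * ln (real n - 1)) / ln (real n) \<le> p"
    and "p \<le> 2"
  shows "max 1 (fact n / real n powr (real n / p)) \<le> U n p \<and>
         U n p \<le> exp ((p - 1) / p * exp (1 / (p - 1))) * (fact n / real n powr (real n / p))"
proof -
  have p: "p > 1" using p_gt1[OF assms(1,2)] .
  have p0: "p > 0" using p by simp
  define S where "S = {per n A | A. \<forall>i<n. row_lp_norm n p A i = 1}"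
  have US: "U n p = Sup S" by (simp add: U_def S_def)
  have bound: "x \<le> Bk p n" if "x \<in> S" for x
    using that per_le_Bk[OF p] by (auto simp: S_def)
  have bdd: "bdd_above S" using bound by (auto simp: bdd_above_def)
  have i1: "1 \<in> S" unfolding S_def using per_Id[of n] row_Id p0 by (auto intro!: exI[of _ Id_mat])
  have i2: "fact n / real n powr (real n / p) \<in> S" unfolding S_def
    using per_Un[of n p] row_Un[of _ n p] p0 assms(1) by (auto intro!: exI[of _ "Un_mat n p"])
  have "max 1 (fact n / real n powr (real n / p)) \<le> U n p"
    unfolding US using cSup_upper[OF i1 bdd] cSup_upper[OF i2 bdd] by simp
  moreover have "U n p \<le> exp ((p - 1) / p * exp (1 / (p - 1))) * (fact n / real n powr (real n / p))"
  proof -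
    have "Sup S \<le> Bk p n" using i1 bound by (intro cSup_least) auto
    also have "\<dots> \<le> exp ((p - 1) / p * exp (1 / (p - 1))) * (fact n / real n powr (real n / p))"
      using Bk_bound[OF p] assms(1) by simp
    finally show ?thesis by (simp add: US)
  qed
  ultimately show ?thesis by simp
qed

end
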